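(* Let $g\colon X_m\to X_m$ be an odometer with metric $d(x,y)=\sup_{k\ge1}2^{-k}\delta(x_k,y_k)$, where $\delta(a,b)=0$ if $a=b$ and $1$ otherwise. Let $X=\{p\}\sqcup X_m$ with $d$ extended to a metric on $X$ such that $d(p,x)>1$ for all $x\in X_m$. Let $q=(0,0,\dots)\in X_m$ and define $f\colon X\to X$ by $f(p)=q$ and $f(x)=g(x)$ for $x\in X_m$. Then $f$ is equicontinuous and has the shadowing property, but $f$ does not have the s-limit shadowing property.
   Context: Odometer: given a strictly increasing sequence $m=(m_k)_{k\ge1}$ of positive integers with $m_1\ge2$ and $m_k\mid m_{k+1}$, $X_m=\{(x_k)_{k\ge1}\in\prod_{k}\{0,\dots,m_k-1\}: x_k\equiv x_{k+1}\pmod{m_k}\ \forall k\}$ and $g(x)_k=x_k+1\pmod{m_k}$. $f$ is equicontinuous if for every $\epsilon>0$ there is $\delta>0$ with $d(x,y)\le\delta\Rightarrow\sup_{n\ge0}d(f^n(x),f^n(y))\le\epsilon$. A $\delta$-pseudo orbit is $(x_i)_{i\ge0}$ with $d(f(x_i),x_{i+1})\le\delta$ for all $i$; it is $\epsilon$-shadowed by $x$ if $d(x_i,f^i(x))\le\epsilon$ for all $i$; a limit pseudo orbit satisfies $\lim_i d(f(x_i),x_{i+1})=0$, and $y$ is a limit shadowing point of it if $\lim_i d(x_i,f^i(y))=0$. Shadowing property: for every $\epsilon>0$ there is $\delta>0$ such that every $\delta$-pseudo orbit is $\epsilon$-shadowed by some point. s-limit shadowing property: for every $\epsilon>0$ there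 is $\delta>0$ such that (1) every $\delta$-pseudo orbit is $\epsilon$-shadowed by some point, and (2) every $\delta$-pseudo orbit that is also a limit pseudo orbit is $\epsilon$-shadowed by some point that is also a limit shadowing point of it. *)

theory Defs
  imports Complex_Main
begin

text \<open>Sequences are indexed by k \<ge> 1; index 0 is unused and normalised to 0.\<close>

definition odometer_seq :: "(nat \<Rightarrow> nat) \<Rightarrow> bool" where
  "odometer_seq m \<longleftrightarrow> m 1 \<ge> 2 \<and> (\<forall>k\<ge>1. m k < m (Suc k) \<and> m k dvd m (Suc k))"

definition odometer_space :: "(nat \<Rightarrow> nat) \<Rightarrow> (nat \<Rightarrow> nat) set" where
  "odometer_space m = {x. x 0 = 0 \<and> (\<forall>k\<ge>1. x k < m k \<and> x k mod m k = x (Suc k) mod m k)}"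

definition odometer_map :: "(nat \<Rightarrow> nat) \<Rightarrow> (nat \<Rightarrow> nat) \<Rightarrow> (nat \<Rightarrow> nat)" where
  "odometer_map m x = (\<lambda>k. if k = 0 then 0 else (x k + 1) mod m k)"

definition odometer_dist :: "(nat \<Rightarrow> nat) \<Rightarrow> (nat \<Rightarrow> nat) \<Rightarrow> real" where
  "odometer_dist x y = (SUP k\<in>{1..}. (if x k = y k then 0 else (1/2::real) ^ k))"

definition metric_on :: "'a set \<Rightarrow> ('a \<Rightarrow> 'a \<Rightarrow> real) \<Rightarrow> bool" where
  "metric_on S d \<longleftrightarrow>
     (\<forall>x\<in>S. \<forall>y\<in>S. 0 \<le> d x y \<and> (d x y = 0 \<longleftrightarrow> x = y) \<and> d x y = d y x) \<and>
     (\<forall>x\<in>S. \<forall>y\<in>S. \<forall>z\<in>S. d x z \<le> d x y + d y z)"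

definition equicontinuous_on :: "'a set \<Rightarrow> ('a \<Rightarrow> 'a \<Rightarrow> real) \<Rightarrow> ('a \<Rightarrow> 'a) \<Rightarrow> bool" where
  "equicontinuous_on S d f \<longleftrightarrow>
     (\<forall>\<epsilon>>0. \<exists>\<delta>>0. \<forall>x\<in>S. \<forall>y\<in>S. d x y \<le> \<delta> \<longrightarrow> (\<forall>n. d ((f ^^ n) x) ((f ^^ n) y) \<le> \<epsilon>))"

definition pseudo_orbit :: "'a set \<Rightarrow> ('a \<Rightarrow> 'a \<Rightarrow> real) \<Rightarrow> ('a \<Rightarrow> 'a) \<Rightarrow> real \<Rightarrow> (nat \<Rightarrow> 'a) \<Rightarrow> bool" where
  "pseudo_orbit S d f \<delta> xs \<longleftrightarrow> (\<forall>i. xs i \<in> S) \<and> (\<forall>i. d (f (xs i)) (xs (Suc i)) \<le> \<delta>)"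

definition limit_pseudo_orbit :: "'a set \<Rightarrow> ('a \<Rightarrow> 'a \<Rightarrow> real) \<Rightarrow> ('a \<Rightarrow> 'a) \<Rightarrow> (nat \<Rightarrow> 'a) \<Rightarrow> bool" where
  "limit_pseudo_orbit S d f xs \<longleftrightarrow> (\<forall>i. xs i \<in> S) \<and> (\<lambda>i. d (f (xs i)) (xs (Suc i))) \<longlonglongrightarrow> 0"

definition shadows :: "('a \<Rightarrow> 'a \<Rightarrow> real) \<Rightarrow> ('a \<Rightarrow> 'a) \<Rightarrow> real \<Rightarrow> (nat \<Rightarrow> 'a) \<Rightarrow> 'a \<Rightarrow> bool" where
  "shadows d f \<epsilon> xs x \<longleftrightarrow> (\<forall>i. d (xs i) ((f ^^ i) x) \<le> \<epsilon>)"

definition limit_shadows :: "('a \<Rightarrow> 'a \<Rightarrow> real) \<Rightarrow> ('a \<Rightarrow> 'a) \<Rightarrow> (nat \<Rightarrow> 'a) \<Rightarrow> 'a \<Rightarrow> bool" where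
  "limit_shadows d f xs y \<longleftrightarrow> (\<lambda>i. d (xs i) ((f ^^ i) y)) \<longlonglongrightarrow> 0"

definition shadowing_property :: "'a set \<Rightarrow> ('a \<Rightarrow> 'a \<Rightarrow> real) \<Rightarrow> ('a \<Rightarrow> 'a) \<Rightarrow> bool" where
  "shadowing_property S d f \<longleftrightarrow>
     (\<forall>\<epsilon>>0. \<exists>\<delta>>0. \<forall>xs. pseudo_orbit S d f \<delta> xs \<longrightarrow> (\<exists>x\<in>S. shadows d f \<epsilon> xs x))"

definition s_limit_shadowing_property :: "'a set \<Rightarrow> ('a \<Rightarrow> 'a \<Rightarrow> real) \<Rightarrow> ('a \<Rightarrow> 'a) \<Rightarrow> bool" where
  "s_limit_shadowing_property S d f \<longleftrightarrow>
     (\<forall>\<epsilon>>0. \<exists>\<delta>>0.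
        (\<forall>xs. pseudo_orbit S d f \<delta> xs \<longrightarrow> (\<exists>x\<in>S. shadows d f \<epsilon> xs x)) \<and>
        (\<forall>xs. pseudo_orbit S d f \<delta> xs \<and> limit_pseudo_orbit S d f xs \<longrightarrow>
              (\<exists>x\<in>S. shadows d f \<epsilon> xs x \<and> limit_shadows d f xs x)))"

section \<open>The example: X = {p} \<squnion> X_m, p = None\<close>

definition ext_space :: "(nat \<Rightarrow> nat) \<Rightarrow> (nat \<Rightarrow> nat) option set" where
  "ext_space m = insert None (Some ` odometer_space m)"

definition ext_map :: "(nat \<Rightarrow> nat) \<Rightarrow> (nat \<Rightarrow> nat) option \<Rightarrow> (nat \<Rightarrow> nat) option" where
  "ext_map m z = (case z of None \<Rightarrow> Some (\<lambda>_. 0) | Some x \<Rightarrow> Some (odometer_map m x))"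

end

theory Submission
  imports Defs
begin

lemma m_pos: assumes "odometer_seq m" "k \<ge> 1" shows "m k \<ge> 2"
  using assms(2)
proof (induction k rule: dec_induct)
  case base then show ?case using assms(1) by (simp add: odometer_seq_def)
next
  case (step n) then show ?case using assms(1) unfolding odometer_seq_def
    by (metis Suc_leD order_le_less_trans less_imp_le not_le order.trans)
qed

lemma m_dvd: assumes "odometer_seq m" "1 \<le> k" "k \<le> K" shows "m k dvd m K"
  using assms(3)
proof (induction K rule: dec_induct)
  case base then show ?case by simp
next
  case (step n) then show ?case using assms(1,2) unfolding odometer_seq_def
    by (meson dvd_trans order_trans)
qed

lemma map_space: assumes "odometer_seq m" "x \<in> odometer_space m"
  shows "odometer_map m x \<in> odometer_space m"
proof -
  have "\<forall>k\<ge>1. odometer_map m x k < m k \<and> odometer_map m x k mod m k = odometer_map m x (Suc k) mod m k"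
  proof (intro allI impI)
    fix k :: nat assume k: "k \<ge> 1"
    have p: "m k \<ge> 2" using m_pos[OF assms(1) k] .
    have d: "m k dvd m (Suc k)" using assms(1) k by (simp add: odometer_seq_def)
    have e: "x k mod m k = x (Suc k) mod m k" using assms(2) k unfolding odometer_space_def by blast
    have "((x (Suc k) + 1) mod m (Suc k)) mod m k = (x (Suc k) + 1) mod m k"
      by (rule mod_mod_cancel[OF d])
    also have "\<dots> = (x (Suc k) mod m k + 1) mod m k" by (simp add: mod_Suc_eq)
    also have "\<dots> = (x k mod m k + 1) mod m k" using e by simp
    also have "\<dots> = (x k + 1) mod m k" by (simp add: mod_Suc_eq)
    finally have eq: "(x k + 1) mod m k = ((x (Suc k) + 1) mod m (Suc k)) mod m k" by simp
    have a1: "odometer_map m x k = (x k + 1) mod m k" using k by (simp add: odometer_map_def)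
    have a2: "odometer_map m x (Suc k) = (x (Suc k) + 1) mod m (Suc k)" by (simp add: odometer_map_def)
    have "0 < m k" using p by simp
    then show "odometer_map m x k < m k \<and> odometer_map m x k mod m k = odometer_map m x (Suc k) mod m k"
      unfolding a1 a2 using eq by simp
  qed
  moreover have "odometer_map m x 0 = 0" by (simp add: odometer_map_def)
  ultimately show ?thesis unfolding odometer_space_def by blast
qed

lemma iter_space: assumes "odometer_seq m" "x \<in> odometer_space m"
  shows "(odometer_map m ^^ n) x \<in> odometer_space m"
  by (induction n) (auto intro: map_space[OF assms(1)] assms(2))

lemma zero_space: assumes "odometer_seq m" shows "(\<lambda>_. 0) \<in> odometer_space m"
proof -
  have "\<And>k. k\<ge>1 \<Longrightarrow> 0 < m k" using m_pos[OF assms] by fastforce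
  then show ?thesis by (simp add: odometer_space_def)
qed

lemma iter_formula': assumes "k \<ge> 1" "x k < m k"
  shows "(odometer_map m ^^ n) x k = (x k + n) mod m k"
proof (induction n)
  case 0 then show ?case using assms by simp
next
  case (Suc n)
  have "(odometer_map m ^^ Suc n) x k = ((odometer_map m ^^ n) x k + 1) mod m k"
    using assms(1) by (simp add: odometer_map_def)
  also have "\<dots> = (x k + Suc n) mod m k" using Suc by (simp add: mod_Suc_eq)
  finally show ?case .
qed

lemma modcancel: assumes "(a + n) mod (M::nat) = (b + n) mod M" "a < M" "b < M" shows "a = b"
proof -
  have g: "c = d" if "(c + n) mod M = (d + n) mod M" "c < M" "d \<le> c" for c d
  proof -
    have "M dvd (c + n) - (d + n)" using mod_eq_dvd_iff_nat[of "d+n" "c+n" M] that by simp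
    then have "M dvd c - d" by simp
    moreover have "c - d < M" using that by simp
    ultimately have "c - d = 0" using dvd_imp_le by fastforce
    then show ?thesis using that by simp
  qed
  show ?thesis using g[of a b] g[of b a] assms by (metis nat_le_linear)
qed

lemma dist_upper: assumes "\<forall>k. 1 \<le> k \<and> k < K \<longrightarrow> x k = y k"
  shows "odometer_dist x y \<le> (1/2)^K"
  unfolding odometer_dist_def
proof (rule cSUP_least)
  show "{1::nat..} \<noteq> {}" by auto
  fix k :: nat assume "k \<in> {1..}"
  then show "(if x k = y k then 0 else (1/2::real)^k) \<le> (1/2)^K"
    using assms by (auto intro!: power_decreasing)
qed

lemma bdd: "bdd_above ((\<lambda>k. if x k = y k then 0 else (1/2::real) ^ k) ` {1..})"
  by (rule bdd_aboveI2[where M=1]) (auto simp: power_le_one)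

lemma dist_lower: assumes "k \<ge> 1" "x k \<noteq> y k"
  shows "odometer_dist x y \<ge> (1/2)^k"
proof -
  have "(if x k = y k then 0 else (1/2::real)^k) \<le> odometer_dist x y"
    unfolding odometer_dist_def by (rule cSUP_upper[OF _ bdd]) (use assms in auto)
  then show ?thesis using assms by simp
qed

lemma dist_coord: assumes "odometer_dist x y \<le> d" "d < (1/2)^k" "k \<ge> 1" shows "x k = y k"
  using dist_lower[of k x y] assms by fastforce

lemma dist_iter: assumes "odometer_seq m" "x \<in> odometer_space m" "y \<in> odometer_space m"
  shows "odometer_dist ((odometer_map m ^^ n) x) ((odometer_map m ^^ n) y) = odometer_dist x y"
  unfolding odometer_dist_def
proof (rule SUP_cong)
  fix k :: nat assume k: "k \<in> {1..}"
  have xk: "x k < m k" "y k < m k" using assms k by (auto simp: odometer_space_def)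
  have "((x k + n) mod m k = (y k + n) mod m k) = (x k = y k)"
    using xk modcancel[of "x k" n "m k" "y k"] by auto
  then show "(if (odometer_map m ^^ n) x k = (odometer_map m ^^ n) y k then 0 else (1/2::real)^k) =
        (if x k = y k then 0 else (1/2)^k)"
    using iter_formula'[of k x m n] iter_formula'[of k y m n] xk k by simp
qed simp


lemma ext_iter_Some: "(ext_map m ^^ n) (Some x) = Some ((odometer_map m ^^ n) x)"
  by (induction n) (auto simp: ext_map_def)

lemma ext_iter_None: "(ext_map m ^^ Suc n) None = Some ((odometer_map m ^^ n) (\<lambda>_. 0))"
  by (simp only: funpow_Suc_right o_def) (simp add: ext_map_def ext_iter_Some)

lemma ext_space_iff: "z \<in> ext_space m \<longleftrightarrow> z = None \<or> (\<exists>a. z = Some a \<and> a \<in> odometer_space m)"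
  by (auto simp: ext_space_def)

lemma ext_map_space: assumes "odometer_seq m" "z \<in> ext_space m" shows "ext_map m z \<in> ext_space m"
  using assms zero_space[OF assms(1)] map_space[OF assms(1)]
  by (auto simp: ext_space_def ext_map_def)

lemma ext_iter_space: assumes "odometer_seq m" "z \<in> ext_space m" shows "(ext_map m ^^ n) z \<in> ext_space m"
  by (induction n) (auto intro: ext_map_space[OF assms(1)] assms(2))

lemma chain:
  assumes "\<forall>i k. 1 \<le> k \<and> k < K \<longrightarrow> ys (Suc i) k = odometer_map m (ys i) k"
    and "\<forall>k. 1 \<le> k \<and> k < K \<longrightarrow> ys 0 k = y0 k"
    and "1 \<le> k" "k < K"
  shows "ys i k = (odometer_map m ^^ i) y0 k"
proof (induction i)
  case 0 then show ?case using assms by simp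
next
  case (Suc i)
  have "ys (Suc i) k = odometer_map m (ys i) k" using assms by blast
  also have "\<dots> = (ys i k + 1) mod m k" using assms(3) by (simp add: odometer_map_def)
  also have "\<dots> = ((odometer_map m ^^ i) y0 k + 1) mod m k" using Suc by simp
  also have "\<dots> = (odometer_map m ^^ Suc i) y0 k" using assms(3) by (simp add: odometer_map_def)
  finally show ?case .
qed

lemma coord_from_dist: assumes "odometer_dist u v \<le> (1/2)^K" "1 \<le> k" "k < K" shows "u k = v k"
proof -
  have "(1/2::real)^K < (1/2)^k" using assms(3) by (intro power_strict_decreasing) auto
  then show ?thesis using dist_coord[OF assms(1) _ assms(2)] by simp
qed

theorem mainTheorem14:
  fixes m :: "nat \<Rightarrow> nat"
    and D :: "(nat \<Rightarrow> nat) option \<Rightarrow> (nat \<Rightarrow> nat) option \<Rightarrow> real"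
  assumes "odometer_seq m"
    and "metric_on (ext_space m) D"
    and "\<forall>x\<in>odometer_space m. \<forall>y\<in>odometer_space m. D (Some x) (Some y) = odometer_dist x y"
    and "\<forall>x\<in>odometer_space m. D None (Some x) > 1"
  shows "equicontinuous_on (ext_space m) D (ext_map m)
       \<and> shadowing_property (ext_space m) D (ext_map m)
       \<and> \<not> s_limit_shadowing_property (ext_space m) D (ext_map m)"
proof -
  note om = assms(1)
  have Dself: "D z z = 0" if "z \<in> ext_space m" for z
    using assms(2) that unfolding metric_on_def by blast
  have Dsym: "D z w = D w z" if "z \<in> ext_space m" "w \<in> ext_space m" for z w
    using assms(2) that unfolding metric_on_def by blast
  have NoneS: "None \<in> ext_space m" by (simp add: ext_space_def)
  have SomeS: "Some a \<in> ext_space m" if "a \<in> odometer_space m" for a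
    using that by (simp add: ext_space_def)
  have Dfar: "D (Some a) None > 1" if "a \<in> odometer_space m" for a
    using Dsym[OF SomeS[OF that] NoneS] assms(4) that by simp
  have zsp: "(\<lambda>_. 0) \<in> odometer_space m" by (rule zero_space[OF om])
  have E: "equicontinuous_on (ext_space m) D (ext_map m)"
    unfolding equicontinuous_on_def
  proof (intro allI impI)
    fix \<epsilon> :: real assume e: "\<epsilon> > 0"
    show "\<exists>\<delta>>0. \<forall>x\<in>ext_space m. \<forall>y\<in>ext_space m. D x y \<le> \<delta> \<longrightarrow>
            (\<forall>n. D ((ext_map m ^^ n) x) ((ext_map m ^^ n) y) \<le> \<epsilon>)"
    proof (intro exI[of _ "min \<epsilon> (1/2)"] conjI ballI impI allI)
      show "min \<epsilon> (1/2) > 0" using e by simp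
      fix x y n assume x: "x \<in> ext_space m" and y: "y \<in> ext_space m" and d: "D x y \<le> min \<epsilon> (1/2)"
      show "D ((ext_map m ^^ n) x) ((ext_map m ^^ n) y) \<le> \<epsilon>"
      proof (cases x)
        case None
        show ?thesis
        proof (cases y)
          case None
          then show ?thesis using \<open>x = None\<close> Dself[OF ext_iter_space[OF om NoneS]] e by simp
        next
          case (Some b)
          then have "b \<in> odometer_space m" using y by (simp add: ext_space_def image_iff)
          then show ?thesis using assms(4) d None Some by fastforce
        qed
      next
        case (Some a)
        then have a: "a \<in> odometer_space m" using x by (simp add: ext_space_def image_iff)
        show ?thesis
        proof (cases y)
          case None
          then show ?thesis using Dfar[OF a] d Some by fastforce
        next
          case (Some b)
          then have b: "b \<in> odometer_space m" using y by (simp add: ext_space_def image_iff)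
          have "D ((ext_map m ^^ n) x) ((ext_map m ^^ n) y)
              = odometer_dist ((odometer_map m ^^ n) a) ((odometer_map m ^^ n) b)"
            using \<open>x = Some a\<close> Some assms(3) iter_space[OF om a] iter_space[OF om b]
            by (simp add: ext_iter_Some)
          also have "\<dots> = odometer_dist a b" by (rule dist_iter[OF om a b])
          also have "\<dots> = D x y" using \<open>x = Some a\<close> Some assms(3) a b by simp
          finally show ?thesis using d by simp
        qed
      qed
    qed
  qed
  have Sh: "shadowing_property (ext_space m) D (ext_map m)"
    unfolding shadowing_property_def
  proof (intro allI impI)
    fix \<epsilon> :: real assume e: "\<epsilon> > 0"
    obtain n where n: "(1/2::real)^n < \<epsilon>" using real_arch_pow_inv[OF e, of "1/2"] by auto
    define K where "K = Suc n"
    have "(1/2::real)^K \<le> (1/2)^n" unfolding K_def by (intro power_decreasing) auto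
    then have KE: "(1/2::real)^K < \<epsilon>" using n by linarith
    have Kh: "(1/2::real)^K \<le> 1/2" unfolding K_def by (simp add: power_le_one)
    show "\<exists>\<delta>>0. \<forall>xs. pseudo_orbit (ext_space m) D (ext_map m) \<delta> xs \<longrightarrow> (\<exists>x\<in>ext_space m. shadows D (ext_map m) \<epsilon> xs x)"
    proof (intro exI[of _ "(1/2::real)^K"] conjI allI impI)
      show "(1/2::real)^K > 0" by simp
      fix xs assume po: "pseudo_orbit (ext_space m) D (ext_map m) ((1/2)^K) xs"
      have xsS: "\<And>i. xs i \<in> ext_space m" and xsd: "\<And>i. D (ext_map m (xs i)) (xs (Suc i)) \<le> (1/2)^K"
        using po unfolding pseudo_orbit_def by auto
      have ex: "\<exists>b. xs (Suc i) = Some b \<and> b \<in> odometer_space m" for i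
      proof -
        obtain c where c: "ext_map m (xs i) = Some c" "c \<in> odometer_space m"
          using ext_map_space[OF om xsS[of i]] by (cases "xs i") (auto simp: ext_map_def ext_space_def)
        show ?thesis
        proof (cases "xs (Suc i)")
          case None
          then show ?thesis using Dfar[OF c(2)] xsd[of i] c Kh by auto
        next
          case (Some b) then show ?thesis using xsS[of "Suc i"] by (auto simp: ext_space_def)
        qed
      qed
      define ys where "ys i = (SOME b. xs (Suc i) = Some b \<and> b \<in> odometer_space m)" for i
      have ys: "xs (Suc i) = Some (ys i)" "ys i \<in> odometer_space m" for i
        using someI_ex[OF ex[of i]] unfolding ys_def by auto
      have step: "\<forall>i k. 1 \<le> k \<and> k < K \<longrightarrow> ys (Suc i) k = odometer_map m (ys i) k"
      proof (intro allI impI)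
        fix i k assume k: "1 \<le> k \<and> k < K"
        have "D (Some (odometer_map m (ys i))) (Some (ys (Suc i))) \<le> (1/2)^K"
          using xsd[of "Suc i"] ys[of i] ys[of "Suc i"] by (simp add: ext_map_def)
        then have "odometer_dist (odometer_map m (ys i)) (ys (Suc i)) \<le> (1/2)^K"
          using assms(3) map_space[OF om ys(2)[of i]] ys(2)[of "Suc i"] by simp
        from coord_from_dist[OF this] k have "odometer_map m (ys i) k = ys (Suc i) k" by blast
        then show "ys (Suc i) k = odometer_map m (ys i) k" by (rule sym)
      qed
      show "\<exists>x\<in>ext_space m. shadows D (ext_map m) \<epsilon> xs x"
      proof (cases "xs 0")
        case None
        have st: "\<forall>k. 1 \<le> k \<and> k < K \<longrightarrow> ys 0 k = (\<lambda>_. 0) k"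
        proof (intro allI impI)
          fix k assume k: "1 \<le> k \<and> k < K"
          have "D (Some (\<lambda>_. 0)) (Some (ys 0)) \<le> (1/2)^K"
            using xsd[of 0] None ys[of 0] by (simp add: ext_map_def)
          then have "odometer_dist (\<lambda>_. 0) (ys 0) \<le> (1/2)^K"
            using assms(3) zsp ys(2)[of 0] by simp
          from coord_from_dist[OF this] k have "(\<lambda>_. 0::nat) k = ys 0 k" by blast
          then show "ys 0 k = (\<lambda>_. 0) k" by (rule sym)
        qed
        have "shadows D (ext_map m) \<epsilon> xs None"
          unfolding shadows_def
        proof
          fix i show "D (xs i) ((ext_map m ^^ i) None) \<le> \<epsilon>"
          proof (cases i)
            case 0 then show ?thesis using None Dself[OF NoneS] e by simp
          next
            case (Suc j)
            have "odometer_dist (ys j) ((odometer_map m ^^ j) (\<lambda>_. 0)) \<le> (1/2)^K"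
              using chain[OF step st] by (intro dist_upper) auto
            moreover have "D (xs i) ((ext_map m ^^ i) None) = odometer_dist (ys j) ((odometer_map m ^^ j) (\<lambda>_. 0))"
              using Suc ys[of j] ext_iter_None[where m=m and n=j] assms(3) iter_space[OF om zsp] by simp
            ultimately show ?thesis using KE by simp
          qed
        qed
        then show ?thesis using NoneS by blast
      next
        case (Some a0)
        have a0: "a0 \<in> odometer_space m" using xsS[of 0] Some by (auto simp: ext_space_def)
        define zs where "zs i = (case i of 0 \<Rightarrow> a0 | Suc j \<Rightarrow> ys j)" for i
        have zs: "xs i = Some (zs i)" "zs i \<in> odometer_space m" for i
          using Some ys a0 by (cases i, simp_all add: zs_def)+
        have step2: "\<forall>i k. 1 \<le> k \<and> k < K \<longrightarrow> zs (Suc i) k = odometer_map m (zs i) k"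
        proof (intro allI impI)
          fix i k assume k: "1 \<le> k \<and> k < K"
          have "D (Some (odometer_map m (zs i))) (Some (zs (Suc i))) \<le> (1/2)^K"
            using xsd[of i] zs[of i] zs[of "Suc i"] by (simp add: ext_map_def)
          then have "odometer_dist (odometer_map m (zs i)) (zs (Suc i)) \<le> (1/2)^K"
            using assms(3) map_space[OF om zs(2)[of i]] zs(2)[of "Suc i"] by simp
          from coord_from_dist[OF this] k have "odometer_map m (zs i) k = zs (Suc i) k" by blast
          then show "zs (Suc i) k = odometer_map m (zs i) k" by (rule sym)
        qed
        have st2: "\<forall>k. 1 \<le> k \<and> k < K \<longrightarrow> zs 0 k = a0 k" by (simp add: zs_def)
        have "shadows D (ext_map m) \<epsilon> xs (Some a0)"
          unfolding shadows_def
        proof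
          fix i
          have "odometer_dist (zs i) ((odometer_map m ^^ i) a0) \<le> (1/2)^K"
            using chain[OF step2 st2] by (intro dist_upper) auto
          moreover have "D (xs i) ((ext_map m ^^ i) (Some a0)) = odometer_dist (zs i) ((odometer_map m ^^ i) a0)"
            using zs[of i] ext_iter_Some assms(3) iter_space[OF om a0] by simp
          ultimately show "D (xs i) ((ext_map m ^^ i) (Some a0)) \<le> \<epsilon>" using KE by simp
        qed
        then show ?thesis using SomeS[OF a0] by blast
      qed
    qed
  qed
  have NS: "\<not> s_limit_shadowing_property (ext_space m) D (ext_map m)"
  proof
    assume sl: "s_limit_shadowing_property (ext_space m) D (ext_map m)"
    have ex: "\<exists>\<delta>::real>0. \<forall>xs. pseudo_orbit (ext_space m) D (ext_map m) \<delta> xs \<and> limit_pseudo_orbit (ext_space m) D (ext_map m) xs \<longrightarrow>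
              (\<exists>x\<in>ext_space m. shadows D (ext_map m) (1/2) xs x \<and> limit_shadows D (ext_map m) xs x)"
    proof -
      have h: "(1/2::real) > 0" by simp
      from sl[unfolded s_limit_shadowing_property_def, rule_format, OF h] show ?thesis by blast
    qed
    then obtain \<delta> :: real where dpos: "\<delta> > 0" and
      H: "\<forall>xs. pseudo_orbit (ext_space m) D (ext_map m) \<delta> xs \<and> limit_pseudo_orbit (ext_space m) D (ext_map m) xs \<longrightarrow>
              (\<exists>x\<in>ext_space m. shadows D (ext_map m) (1/2) xs x \<and> limit_shadows D (ext_map m) xs x)"
      by blast
    obtain n where n: "(1/2::real)^n < \<delta>" using real_arch_pow_inv[OF dpos, of "1/2"] by auto
    define K where "K = Suc n"
    have K1: "1 \<le> K" unfolding K_def by simp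
    define N where "N = m K"
    define z where "z j = (odometer_map m ^^ j) (\<lambda>_. 0)" for j
    have zS: "z j \<in> odometer_space m" for j unfolding z_def by (rule iter_space[OF om zsp])
    have zk: "z j k = j mod m k" if "1 \<le> k" for j k
      using iter_formula'[of k "\<lambda>_. 0" m j] that m_pos[OF om that] unfolding z_def by simp
    have zsuc: "odometer_map m (z j) = z (Suc j)" for j unfolding z_def by simp
    define xs where "xs i = (case i of 0 \<Rightarrow> None | Suc j \<Rightarrow> Some (z (N + j)))" for i
    have xsS: "xs i \<in> ext_space m" for i
      using NoneS SomeS[OF zS] by (cases i) (auto simp: xs_def)
    have d0: "D (ext_map m (xs 0)) (xs (Suc 0)) \<le> (1/2)^(Suc K)"
    proof -
      have "odometer_dist (\<lambda>_. 0) (z N) \<le> (1/2)^(Suc K)"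
      proof (rule dist_upper, intro allI impI)
        fix k assume k: "1 \<le> k \<and> k < Suc K"
        then have "m k dvd N" unfolding N_def using m_dvd[OF om] by simp
        then show "(\<lambda>_. 0::nat) k = z N k" using zk k by simp
      qed
      then show ?thesis using assms(3) zsp zS[of N] by (simp add: xs_def ext_map_def)
    qed
    have dS: "D (ext_map m (xs (Suc j))) (xs (Suc (Suc j))) = 0" for j
      using Dself[OF SomeS[OF zS[of "Suc (N + j)"]]] zsuc[of "N + j"] by (simp add: xs_def ext_map_def)
    have KK: "(1/2::real)^(Suc K) \<le> \<delta>"
    proof -
      have "(1/2::real)^(Suc K) \<le> (1/2)^n" unfolding K_def by (intro power_decreasing) auto
      then show ?thesis using n by simp
    qed
    have po: "pseudo_orbit (ext_space m) D (ext_map m) \<delta> xs"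
      unfolding pseudo_orbit_def
    proof (intro conjI allI)
      fix i show "xs i \<in> ext_space m" by (rule xsS)
      show "D (ext_map m (xs i)) (xs (Suc i)) \<le> \<delta>"
        using d0 dS KK dpos by (cases i) auto
    qed
    have lpo: "limit_pseudo_orbit (ext_space m) D (ext_map m) xs"
      unfolding limit_pseudo_orbit_def
    proof (intro conjI allI)
      fix i show "xs i \<in> ext_space m" by (rule xsS)
    next
      show "(\<lambda>i. D (ext_map m (xs i)) (xs (Suc i))) \<longlonglongrightarrow> 0"
        by (rule LIMSEQ_imp_Suc) (simp add: dS)
    qed
    obtain x where x: "x \<in> ext_space m" "shadows D (ext_map m) (1/2) xs x" "limit_shadows D (ext_map m) xs x"
      using H po lpo by blast
    show False
    proof (cases x)
      case (Some a)
      then have a: "a \<in> odometer_space m" using x(1) by (auto simp: ext_space_def)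
      have "D (xs 0) ((ext_map m ^^ 0) x) \<le> 1/2" using x(2) unfolding shadows_def by blast
      then have "D None (Some a) \<le> 1/2" using Some by (simp add: xs_def)
      then show False using assms(4) a by force
    next
      case None
      have "(\<lambda>i. D (xs i) ((ext_map m ^^ i) None)) \<longlonglongrightarrow> 0"
        using x(3) None unfolding limit_shadows_def by simp
      then have L: "(\<lambda>j. D (xs (Suc j)) ((ext_map m ^^ Suc j) None)) \<longlonglongrightarrow> 0"
        by (rule LIMSEQ_Suc)
      have lb: "(1/2::real)^(Suc K) \<le> D (xs (Suc j)) ((ext_map m ^^ Suc j) None)" for j
      proof -
        have eq: "D (xs (Suc j)) ((ext_map m ^^ Suc j) None) = odometer_dist (z (N + j)) (z j)"
          using ext_iter_None[where m=m and n=j] assms(3) zS by (simp add: xs_def z_def)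
        have mlt: "m K < m (Suc K)" using om K1 unfolding odometer_seq_def by blast
        have m2: "m K \<ge> 2" using m_pos[OF om K1] .
        have "z (N + j) (Suc K) \<noteq> z j (Suc K)"
        proof
          assume "z (N + j) (Suc K) = z j (Suc K)"
          then have "(N + j) mod m (Suc K) = (0 + j) mod m (Suc K)" using zk by simp
          then have "N = 0" using modcancel[of N j "m (Suc K)" 0] mlt unfolding N_def by simp
          then show False using m2 unfolding N_def by simp
        qed
        then show ?thesis using dist_lower[of "Suc K"] eq by simp
      qed
      have "(1/2::real)^(Suc K) \<le> 0"
        by (rule LIMSEQ_le_const[OF L]) (use lb in blast)
      moreover have "(1/2::real)^(Suc K) > 0" by (rule zero_less_power) simp
      ultimately show False by linarith
    qed
  qed
  show ?thesis using E Sh NS by blast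
qed

end
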